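(* Let $R$ be a ring, $P$ a polygon, $D$ a dissection of $P$, and $c:\operatorname{diag}P\to R$ a map. The following are equivalent: (i) $c$ is a weak frieze with respect to $D$; (ii) $c_{tv}\in R^*$ for every $(t,v)\in D$, and for all distinct vertices $i,k$ of $P$, \[ c_{ik}=\sum_{p\in\mathscr{P}(D,i,k)} c_p . \]
   Context: $R^*$ denotes the set of invertible elements of $R$. A polygon $P$ is a finite set $V$ of at least three vertices with a cyclic ordering, thought of as geometrically realised as a convex polygon in the plane. $\operatorname{diag}P$ is the set of ordered pairs $(i,k)$ of distinct vertices (diagonals); $(i,k)$ is an edge if $i,k$ are neighbours in the cyclic order, otherwise an internal diagonal. Diagonals $(i,k)$ and $(j,\ell)$ cross if $i,j,k,\ell$ are pairwise distinct and $i<j<k<\ell$ or $i<\ell<k<j$ in the cyclic order. A dissection of $P$ is a set $D$ of internal diagonals such that $(i,k)\in D$ implies $(k,i)\in D$, and no two diagonals in $D$ cross. We write $c_{ik}=c(i,k)$ and use the convention $c_{xx}=0$. A map $c:\operatorname{diag}P\to R$ is a weak frieze with respect to $D$ if (1) $c_{tv}\in R^*$ for all $(t,v)\in D$, and (2) whenever $(i,k)$ crosses $(t,v)$ with $(t,v),(v,t)\in D$, one has $c_{ik}=c_{it}c_{vt}^{-1}c_{vk}+c_{iv}c_{tv}^{-1}c_{tk}$. A sequence $(p_1,\ldots,p_\pi)$ of vertices is a $T$-path from $p_1$ to $p_\pi$ with respect to $D$ if: $p_1\neq p_\pi$; the sets $\{p_1,p_2\},\{p_2,p_3\},\ldots,\{p_{\pi-1},p_\pi\}$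 are pairwise different and each has two elements; no diagonal $(p_\alpha,p_{\alpha+1})$ crosses a diagonal in $D$; each diagonal $(p_{2\alpha},p_{2\alpha+1})$ lies in $D$ and crosses $(p_1,p_\pi)$, and these crossing points progress monotonically in the direction from $p_1$ to $p_\pi$. (Then $\pi$ is even.) $\mathscr{P}(D,i,k)$ denotes the set of $T$-paths from $i$ to $k$ with respect to $D$. For such a $T$-path $p$ (assuming $c_{tv}\in R^*$ for $(t,v)\in D$), $c_p=c_{p_1p_2}c_{p_3p_2}^{-1}c_{p_3p_4}c_{p_5p_4}^{-1}\cdots c_{p_{\pi-1}p_{\pi-2}}^{-1}c_{p_{\pi-1}p_\pi}$. *)

theory Defs
  imports Main
begin

text \<open>The polygon P has vertex set {0..<n} (n \<ge> 3) with the cyclic order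
  0, 1, ..., n-1, 0.  Diagonals are pairs of distinct vertices.\<close>

definition cyc3 :: "nat \<Rightarrow> nat \<Rightarrow> nat \<Rightarrow> bool" where
  "cyc3 a b c \<longleftrightarrow> (a < b \<and> b < c) \<or> (b < c \<and> c < a) \<or> (c < a \<and> a < b)"

definition cyc4 :: "nat \<Rightarrow> nat \<Rightarrow> nat \<Rightarrow> nat \<Rightarrow> bool" where
  "cyc4 a b c d \<longleftrightarrow> (a < b \<and> b < c \<and> c < d) \<or> (b < c \<and> c < d \<and> d < a)
                    \<or> (c < d \<and> d < a \<and> a < b) \<or> (d < a \<and> a < b \<and> b < c)"

definition crosses :: "nat \<times> nat \<Rightarrow> nat \<times> nat \<Rightarrow> bool" where
  "crosses d e \<longleftrightarrow> (case d of (i, k) \<Rightarrow> case e of (j, l) \<Rightarrow>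
      distinct [i, j, k, l] \<and> (cyc4 i j k l \<or> cyc4 i l k j))"

definition neighbours :: "nat \<Rightarrow> nat \<Rightarrow> nat \<Rightarrow> bool" where
  "neighbours n i k \<longleftrightarrow> k = (i + 1) mod n \<or> i = (k + 1) mod n"

definition internal_diag :: "nat \<Rightarrow> nat \<times> nat \<Rightarrow> bool" where
  "internal_diag n d \<longleftrightarrow> (case d of (i, k) \<Rightarrow>
      i < n \<and> k < n \<and> i \<noteq> k \<and> \<not> neighbours n i k)"

definition dissection :: "nat \<Rightarrow> (nat \<times> nat) set \<Rightarrow> bool" where
  "dissection n D \<longleftrightarrow> (\<forall>d\<in>D. internal_diag n d)
     \<and> (\<forall>i k. (i, k) \<in> D \<longrightarrow> (k, i) \<in> D)
     \<and> (\<forall>d\<in>D. \<forall>e\<in>D. \<not> crosses d e)"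

definition is_unit :: "'a::ring_1 \<Rightarrow> bool" where
  "is_unit x \<longleftrightarrow> (\<exists>y. x * y = 1 \<and> y * x = 1)"

definition uinv :: "'a::ring_1 \<Rightarrow> 'a" where
  "uinv x = (SOME y. x * y = 1 \<and> y * x = 1)"

definition weak_frieze :: "nat \<Rightarrow> (nat \<times> nat) set \<Rightarrow> (nat \<Rightarrow> nat \<Rightarrow> 'a::ring_1) \<Rightarrow> bool" where
  "weak_frieze n D c \<longleftrightarrow> (\<forall>(t, v)\<in>D. is_unit (c t v))
     \<and> (\<forall>i k t v. i < n \<longrightarrow> k < n \<longrightarrow> (t, v) \<in> D \<longrightarrow> (v, t) \<in> D \<longrightarrow> crosses (i, k) (t, v) \<longrightarrow>
          c i k = c i t * uinv (c v t) * c v k + c i v * uinv (c t v) * c t k)"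

text \<open>Combinatorial description of the order of crossing points along the diagonal (i,k):
  the vertex x lies in the closed half-plane bounded by the chord (a,b) that contains k.\<close>

definition on_k_side :: "nat \<Rightarrow> nat \<Rightarrow> nat \<Rightarrow> nat \<Rightarrow> bool" where
  "on_k_side a b k x \<longleftrightarrow> x = a \<or> x = b \<or> (cyc3 a x b \<longleftrightarrow> cyc3 a k b)"

text \<open>For diagonals d, e both crossing (i,k): the crossing point of d with (i,k) comes
  strictly before that of e, in the direction from i to k.\<close>

definition before :: "nat \<Rightarrow> nat \<Rightarrow> nat \<times> nat \<Rightarrow> nat \<times> nat \<Rightarrow> bool" where
  "before i k d e \<longleftrightarrow> (case d of (a, b) \<Rightarrow> case e of (x, y) \<Rightarrow>
      {a, b} \<noteq> {x, y} \<and> on_k_side a b k x \<and> on_k_side a b k y)"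

text \<open>T-paths as lists p = [p_1, ..., p_pi] (0-indexed in Isabelle: p!0 = p_1).
  The 1-indexed step (p_{2a}, p_{2a+1}) is the 0-indexed step (p!j, p!(j+1)) with j odd.\<close>

definition is_tpath :: "nat \<Rightarrow> (nat \<times> nat) set \<Rightarrow> nat \<Rightarrow> nat \<Rightarrow> nat list \<Rightarrow> bool" where
  "is_tpath n D i k p \<longleftrightarrow>
     length p \<ge> 2 \<and> hd p = i \<and> last p = k \<and> i \<noteq> k \<and> set p \<subseteq> {..<n}
     \<and> (\<forall>a < length p - 1. p ! a \<noteq> p ! (a + 1))
     \<and> (\<forall>a < length p - 1. \<forall>b < length p - 1. a \<noteq> b \<longrightarrow>
            {p ! a, p ! (a + 1)} \<noteq> {p ! b, p ! (b + 1)})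
     \<and> (\<forall>a < length p - 1. \<forall>d\<in>D. \<not> crosses (p ! a, p ! (a + 1)) d)
     \<and> (\<forall>a < length p - 1. odd a \<longrightarrow>
            (p ! a, p ! (a + 1)) \<in> D \<and> crosses (p ! a, p ! (a + 1)) (i, k))
     \<and> (\<forall>a < length p - 1. \<forall>b < length p - 1. odd a \<longrightarrow> odd b \<longrightarrow> a < b \<longrightarrow>
            before i k (p ! a, p ! (a + 1)) (p ! b, p ! (b + 1)))"

definition tpaths :: "nat \<Rightarrow> (nat \<times> nat) set \<Rightarrow> nat \<Rightarrow> nat \<Rightarrow> nat list set" where
  "tpaths n D i k = {p. is_tpath n D i k p}"

fun tweight :: "(nat \<Rightarrow> nat \<Rightarrow> 'a::ring_1) \<Rightarrow> nat list \<Rightarrow> 'a" where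
  "tweight c (a # b # d # rest) = c a b * uinv (c d b) * tweight c (d # rest)"
| "tweight c [a, b] = c a b"
| "tweight c _ = 1"

end

theory Submission
  imports Defs
begin


lemma cyc4_cyc3: "cyc4 a b c d \<longleftrightarrow> cyc3 a b c \<and> cyc3 a c d"
  unfolding cyc4_def cyc3_def by auto

lemma cr_cyc3: "crosses (i,k) (j,l) \<longleftrightarrow> distinct [i,j,k,l] \<and> (cyc3 i j k \<and> cyc3 i k l \<or> cyc3 i l k \<and> cyc3 i k j)"
  unfolding crosses_def cyc4_cyc3 by simp

definition rot :: "nat \<Rightarrow> nat \<Rightarrow> nat \<Rightarrow> nat" where
  "rot n i x = (if i \<le> x then x - i else x + n - i)"

lemma rot_cyc3:
  assumes "a < n" "b < n" "c < n" "i < n"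
  shows "cyc3 (rot n i a) (rot n i b) (rot n i c) = cyc3 a b c"
  using assms unfolding rot_def cyc3_def
  by (cases "i \<le> a"; cases "i \<le> b"; cases "i \<le> c"; simp; linarith)

lemma rot_inj:
  assumes "x < n" "y < n" "i < n"
  shows "rot n i x = rot n i y \<longleftrightarrow> x = y"
  using assms unfolding rot_def by (cases "i \<le> x"; cases "i \<le> y"; simp; linarith)

lemma rot_self: "rot n i i = 0" by (simp add: rot_def)

lemma rot_cross:
  assumes "a < n" "b < n" "x < n" "y < n" "i < n"
  shows "crosses (rot n i a, rot n i b) (rot n i x, rot n i y) = crosses (a,b) (x,y)"
  using assms by (simp add: cr_cyc3 rot_cyc3 rot_inj)

lemma rot_oks:
  assumes "a < n" "b < n" "k < n" "x < n" "i < n"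
  shows "on_k_side (rot n i a) (rot n i b) (rot n i k) (rot n i x) = on_k_side a b k x"
  using assms by (simp add: on_k_side_def rot_cyc3 rot_inj)

lemma rot_bef:
  assumes "a < n" "b < n" "x < n" "y < n" "k < n" "i < n"
  shows "before j (rot n i k) (rot n i a, rot n i b) (rot n i x, rot n i y) = before j' k (a,b) (x,y)"
  using assms by (simp add: before_def rot_oks doubleton_eq_iff rot_inj)

lemma cr_sym: "crosses d e = crosses e d"
  by (cases d; cases e; auto simp: crosses_def cyc4_def)
lemma cr_swap: "crosses (a,b) e = crosses (b,a) e"
  by (cases e; auto simp: crosses_def cyc4_def)
lemma cr_swap2: "crosses e (a,b) = crosses e (b,a)"
  using cr_swap cr_sym by metis

lemma crI_lt: "a < (b::nat) \<Longrightarrow> crosses (a,b) (x,y) \<longleftrightarrow> x \<noteq> a \<and> x \<noteq> b \<and> y \<noteq> a \<and> y \<noteq> b \<and> ((a < x \<and> x < b) \<longleftrightarrow> \<not> (a < y \<and> y < b))"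
  by (cases x a rule: linorder_cases; cases x b rule: linorder_cases; cases y a rule: linorder_cases; cases y b rule: linorder_cases; simp add: crosses_def cyc4_def)

lemma crD: "p < (q::nat) \<Longrightarrow> crosses (p,q) (x,y) \<longleftrightarrow> (p < x \<and> x < q \<and> (y < p \<or> q < y)) \<or> (p < y \<and> y < q \<and> (x < p \<or> q < x))"
  by (auto simp: crI_lt)


lemma cr_self: "\<not> crosses (a,a) e" by (cases e; auto simp: crosses_def)

lemma X0: "crosses (a,b) (0,k) \<longleftrightarrow> 0 < a \<and> 0 < b \<and> (a < k \<and> k < b \<or> b < k \<and> k < a)"
proof (cases "k = 0")
  case True then show ?thesis using cr_self[of 0 "(a,b)"] cr_sym by auto
next
  case False
  have "crosses (a,b) (0,k) = crosses (0,k) (a,b)" by (rule cr_sym)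
  also have "\<dots> \<longleftrightarrow> (0 < a \<and> a < k \<and> k < b) \<or> (0 < b \<and> b < k \<and> k < a)"
    using False by (subst crD) auto
  finally show ?thesis by auto
qed

lemma okI1: "a < k \<Longrightarrow> k < b \<Longrightarrow> on_k_side a b k x \<longleftrightarrow> a \<le> x \<and> x \<le> (b::nat)"
  unfolding on_k_side_def cyc3_def by (cases x a rule: linorder_cases; cases x b rule: linorder_cases; simp)
lemma okI2: "b < k \<Longrightarrow> k < a \<Longrightarrow> on_k_side a b k x \<longleftrightarrow> b \<le> x \<and> x \<le> (a::nat)"
  unfolding on_k_side_def cyc3_def by (cases x a rule: linorder_cases; cases x b rule: linorder_cases; simp)


lemma G1_0:
  assumes "crosses (a,b) (0,k)" "crosses (x,y) (b,k)" "\<not> crosses (x,y) (a,b)"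
  shows "crosses (x,y) (0,k)"
proof -
  have s: "crosses (x,y) (b,k) = crosses (b,k) (x,y)" "crosses (x,y) (a,b) = crosses (a,b) (x,y)"
     "crosses (b,k) (x,y) = crosses (k,b) (x,y)" "crosses (a,b) (x,y) = crosses (b,a) (x,y)"
    using cr_sym cr_swap by blast+
  from assms(1) consider "0 < a" "a < k" "k < b" | "0 < b" "b < k" "k < a" by (auto simp: X0)
  then show ?thesis
  proof cases
    case 1
    have h1: "(k < x \<and> x < b \<and> (y < k \<or> b < y)) \<or> (k < y \<and> y < b \<and> (x < k \<or> b < x))"
      using assms(2) 1 s by (simp add: crD)
    have h2: "\<not> ((a < x \<and> x < b \<and> (y < a \<or> b < y)) \<or> (a < y \<and> y < b \<and> (x < a \<or> b < x)))"
      using assms(3) 1 s crD[of a b] by simp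
    have h3: "x \<noteq> a \<and> x \<noteq> b \<and> y \<noteq> a \<and> y \<noteq> b \<or> True" by simp
    show ?thesis unfolding X0 using h1 h2 1 by auto
  next
    case 2
    have h1: "(b < x \<and> x < k \<and> (y < b \<or> k < y)) \<or> (b < y \<and> y < k \<and> (x < b \<or> k < x))"
      using assms(2) 2 s by (simp add: crD)
    have h2: "\<not> ((b < x \<and> x < a \<and> (y < b \<or> a < y)) \<or> (b < y \<and> y < a \<and> (x < b \<or> a < x)))"
      using assms(3) 2 s crD[of b a] by simp
    show ?thesis unfolding X0 using h1 h2 2 by auto
  qed
qed

lemma crM: "crosses (a,b) (x,y) \<longleftrightarrow> (min a b < x \<and> x < max a b \<and> (y < min a b \<or> max a b < y)) \<or> (min a b < y \<and> y < max a b \<and> (x < min a b \<or> max a b < x))"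
proof (cases a b rule: linorder_cases)
  case less then show ?thesis by (simp add: crD)
next
  case equal then show ?thesis using cr_self by simp
next
  case greater then show ?thesis using cr_swap[of a b] crD[OF greater] by (simp add: min_def max_def)
qed


lemma G2_0:
  assumes "crosses (a,b) (0,k)" "\<not> crosses (0,a) (x,y)" "\<not> crosses (0,b) (x,y)"
    "crosses (x,y) (0,k)" "{x,y} \<noteq> {a,b}"
  shows "before 0 k (a,b) (x,y)"
proof -
  have h4: "0 < x" "0 < y" "x < k \<and> k < y \<or> y < k \<and> k < x" using assms(4) X0 by blast+
  have ab: "0 < a" "0 < b" using assms(1) X0 by blast+
  have c1: "\<not> (x < a \<and> a < y)" "\<not> (y < a \<and> a < x)"
  proof -
    have "\<not> ((0 < x \<and> x < a \<and> (y < 0 \<or> a < y)) \<or> (0 < y \<and> y < a \<and> (x < 0 \<or> a < x)))"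
      using assms(2) crD[OF ab(1), of x y] by simp
    then show "\<not> (x < a \<and> a < y)" "\<not> (y < a \<and> a < x)" using h4(1,2) by blast+
  qed
  have c2: "\<not> (x < b \<and> b < y)" "\<not> (y < b \<and> b < x)"
  proof -
    have "\<not> ((0 < x \<and> x < b \<and> (y < 0 \<or> b < y)) \<or> (0 < y \<and> y < b \<and> (x < 0 \<or> b < x)))"
      using assms(3) crD[OF ab(2), of x y] by simp
    then show "\<not> (x < b \<and> b < y)" "\<not> (y < b \<and> b < x)" using h4(1,2) by blast+
  qed
  have ne: "{a,b} \<noteq> {x,y}" using assms(5) by metis
  from assms(1) consider "a < k" "k < b" | "b < k" "k < a" by (auto simp: X0)
  then show ?thesis
  proof cases
    case 1
    have "a \<le> x \<and> x \<le> b \<and> a \<le> y \<and> y \<le> b"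
      using h4(3) c1 c2 1 by (elim disjE conjE; auto)
    then show ?thesis unfolding before_def using ne okI1[OF 1] by simp
  next
    case 2
    have "b \<le> x \<and> x \<le> a \<and> b \<le> y \<and> y \<le> a"
      using h4(3) c1 c2 2 by (elim disjE conjE; auto)
    then show ?thesis unfolding before_def using ne okI2[OF 2] by simp
  qed
qed


lemma G3_0:
  assumes "crosses (a,b) (0,k)" "before 0 k (a,b) (x,y)" "crosses (x,y) (0,k)" "x \<noteq> b" "y \<noteq> b"
  shows "crosses (x,y) (b,k)"
proof -
  have h4: "0 < x \<and> 0 < y \<and> (x < k \<and> k < y \<or> y < k \<and> k < x)" using assms(3) X0 by blast
  have s: "crosses (x,y) (b,k) = crosses (b,k) (x,y)" "crosses (b,k) (x,y) = crosses (k,b) (x,y)"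
    using cr_sym cr_swap by blast+
  from assms(1) consider "0 < a" "a < k" "k < b" | "0 < b" "b < k" "k < a" by (auto simp: X0)
  then show ?thesis
  proof cases
    case 1
    have "a \<le> x \<and> x \<le> b \<and> a \<le> y \<and> y \<le> b" using assms(2) okI1[OF 1(2,3)] by (simp add: before_def)
    then show ?thesis unfolding s using crD[of k b x y] 1 h4 assms(4,5) by auto
  next
    case 2
    have "b \<le> x \<and> x \<le> a \<and> b \<le> y \<and> y \<le> a" using assms(2) okI2[OF 2(2,3)] by (simp add: before_def)
    then show ?thesis unfolding s(1) using crD[of b k x y] 2 h4 assms(4,5) by auto
  qed
qed


lemma G4_0:
  assumes "crosses (a,b) (0,k)" "before 0 k (a,b) (x,y)" "x \<noteq> a" "x \<noteq> b"
  shows "crosses (0,x) (a,b)"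
proof -
  have s: "crosses (0,x) (a,b) = crosses (a,b) (0,x)" "crosses (a,b) (0,x) = crosses (b,a) (0,x)"
    using cr_sym cr_swap by blast+
  from assms(1) consider "0 < a" "a < k" "k < b" | "0 < b" "b < k" "k < a" by (auto simp: X0)
  then show ?thesis
  proof cases
    case 1
    have "a \<le> x \<and> x \<le> b" using assms(2) okI1[OF 1(2,3)] by (simp add: before_def)
    then show ?thesis unfolding s(1) using crD[of a b 0 x] 1 assms(3,4) by auto
  next
    case 2
    have "b \<le> x \<and> x \<le> a" using assms(2) okI2[OF 2(2,3)] by (simp add: before_def)
    then show ?thesis unfolding s using crD[of b a 0 x] 2 assms(3,4) by auto
  qed
qed


lemma G5_0:
  assumes "crosses (a,b) (0,k)" "crosses (f,g) (0,k)" "before 0 k (a,b) (f,g)" "before 0 k (f,g) (x,y)"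
    "v \<in> {a,b}" "v \<in> {x,y}"
  shows "v \<in> {f,g}"
proof -
  have A: "min a b \<le> f \<and> f \<le> max a b \<and> min a b \<le> g \<and> g \<le> max a b"
  proof -
    from assms(1) consider "0 < a" "a < k" "k < b" | "0 < b" "b < k" "k < a" by (auto simp: X0)
    then show ?thesis
    proof cases
      case 1 then show ?thesis using assms(3) okI1[OF 1(2,3)] by (simp add: before_def)
    next
      case 2 then show ?thesis using assms(3) okI2[OF 2(2,3)] by (simp add: before_def)
    qed
  qed
  have B: "min f g \<le> x \<and> x \<le> max f g \<and> min f g \<le> y \<and> y \<le> max f g"
  proof -
    from assms(2) consider "0 < f" "f < k" "k < g" | "0 < g" "g < k" "k < f" by (auto simp: X0)
    then show ?thesis
    proof cases
      case 1 then show ?thesis using assms(4) okI1[OF 1(2,3)] by (simp add: before_def)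
    next
      case 2 then show ?thesis using assms(4) okI2[OF 2(2,3)] by (simp add: before_def)
    qed
  qed
  have v1: "min f g \<le> v \<and> v \<le> max f g" using B assms(6) by auto
  have v2: "v = min a b \<or> v = max a b" using assms(5) by (auto simp: min_def max_def)
  show ?thesis using v1 v2 A by (auto simp: min_def max_def split: if_splits)
qed


lemma G7_0:
  assumes "crosses (x,y) (0,k)" "crosses (g1,g2) (0,x)"
    "crosses (h1,h2) (0,g1)" "\<not> crosses (h1,h2) (g1,g2)"
  shows "crosses (h1,h2) (0,x)"
proof -
  have g: "0 < g1" "0 < g2" "g1 < x \<and> x < g2 \<or> g2 < x \<and> x < g1" using assms(2) X0 by blast+
  have h: "0 < h1" "0 < h2" "h1 < g1 \<and> g1 < h2 \<or> h2 < g1 \<and> g1 < h1" using assms(3) X0 by blast+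
  have n: "\<not> crosses (g1,g2) (h1,h2)" "\<not> crosses (g2,g1) (h1,h2)" using assms(4) cr_sym cr_swap by blast+
  have "h1 < x \<and> x < h2 \<or> h2 < x \<and> x < h1"
    using g(3)
  proof
    assume gg: "g1 < x \<and> x < g2"
    then have "g1 < g2" by simp
    from n(1) crD[OF this, of h1 h2] have "\<not> (g1 < h2 \<and> h2 < g2 \<and> h1 < g1)" "\<not> (g1 < h1 \<and> h1 < g2 \<and> h2 < g1)" by auto
    then show ?thesis using h(3) gg by (elim disjE; linarith?; auto)
  next
    assume gg: "g2 < x \<and> x < g1"
    then have "g2 < g1" by simp
    from n(2) crD[OF this, of h1 h2] have "\<not> (g2 < h2 \<and> h2 < g1 \<and> g1 < h1)" "\<not> (g2 < h1 \<and> h1 < g1 \<and> g1 < h2)" by auto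
    then show ?thesis using h(3) gg by (elim disjE; linarith?; auto)
  qed
  then show ?thesis unfolding X0 using h(1,2) by blast
qed


lemma rot_lt: "x < n \<Longrightarrow> i < n \<Longrightarrow> rot n i x < n"
  unfolding rot_def by auto

lemma GX1:
  assumes V: "a < n" "b < n" "i < n" "k < n" "x < n" "y < n"
    and h: "crosses (a,b) (i,k)" "crosses (x,y) (b,k)" "\<not> crosses (x,y) (a,b)"
  shows "crosses (x,y) (i,k)"
proof -
  have z: "0 = rot n i i" by (simp add: rot_self)
  have e: "\<And>p q s t. p < n \<Longrightarrow> q < n \<Longrightarrow> s < n \<Longrightarrow> t < n \<Longrightarrow>
     crosses (rot n i p, rot n i q) (rot n i s, rot n i t) = crosses (p,q) (s,t)"
    using rot_cross V(3) by blast
  show ?thesis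
    using G1_0[of "rot n i a" "rot n i b" "rot n i k" "rot n i x" "rot n i y", unfolded z] h V
    by (simp add: e)
qed

lemma GX2:
  assumes V: "a < n" "b < n" "i < n" "k < n" "x < n" "y < n"
    and h: "crosses (a,b) (i,k)" "\<not> crosses (i,a) (x,y)" "\<not> crosses (i,b) (x,y)"
      "crosses (x,y) (i,k)" "{x,y} \<noteq> {a,b}"
  shows "before i k (a,b) (x,y)"
proof -
  have z: "0 = rot n i i" by (simp add: rot_self)
  have e: "\<And>p q s t. p < n \<Longrightarrow> q < n \<Longrightarrow> s < n \<Longrightarrow> t < n \<Longrightarrow>
     crosses (rot n i p, rot n i q) (rot n i s, rot n i t) = crosses (p,q) (s,t)"
    using rot_cross V(3) by blast
  have s: "{rot n i x, rot n i y} \<noteq> {rot n i a, rot n i b}"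
    using h(5) V by (auto simp: doubleton_eq_iff rot_inj)
  have "before (rot n i i) (rot n i k) (rot n i a, rot n i b) (rot n i x, rot n i y)"
    using G2_0[of "rot n i a" "rot n i b" "rot n i k" "rot n i x" "rot n i y", unfolded z] h V s
    by (simp add: e)
  then show ?thesis using rot_bef V by blast
qed

lemma GX3:
  assumes V: "a < n" "b < n" "i < n" "k < n" "x < n" "y < n"
    and h: "crosses (a,b) (i,k)" "before i k (a,b) (x,y)" "crosses (x,y) (i,k)" "x \<noteq> b" "y \<noteq> b"
  shows "crosses (x,y) (b,k)"
proof -
  have z: "0 = rot n i i" by (simp add: rot_self)
  have e: "\<And>p q s t. p < n \<Longrightarrow> q < n \<Longrightarrow> s < n \<Longrightarrow> t < n \<Longrightarrow>
     crosses (rot n i p, rot n i q) (rot n i s, rot n i t) = crosses (p,q) (s,t)"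
    using rot_cross V(3) by blast
  have b: "before (rot n i i) (rot n i k) (rot n i a, rot n i b) (rot n i x, rot n i y)"
    using rot_bef V h(2) by blast
  show ?thesis
    using G3_0[of "rot n i a" "rot n i b" "rot n i k" "rot n i x" "rot n i y", unfolded z] h V b
    by (simp add: e rot_inj)
qed

lemma GX4:
  assumes V: "a < n" "b < n" "i < n" "k < n" "x < n" "y < n"
    and h: "crosses (a,b) (i,k)" "before i k (a,b) (x,y)" "x \<noteq> a" "x \<noteq> b"
  shows "crosses (i,x) (a,b)"
proof -
  have z: "0 = rot n i i" by (simp add: rot_self)
  have e: "\<And>p q s t. p < n \<Longrightarrow> q < n \<Longrightarrow> s < n \<Longrightarrow> t < n \<Longrightarrow>
     crosses (rot n i p, rot n i q) (rot n i s, rot n i t) = crosses (p,q) (s,t)"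
    using rot_cross V(3) by blast
  have b: "before (rot n i i) (rot n i k) (rot n i a, rot n i b) (rot n i x, rot n i y)"
    using rot_bef V h(2) by blast
  show ?thesis
    using G4_0[of "rot n i a" "rot n i b" "rot n i k" "rot n i x" "rot n i y", unfolded z] h V b
    by (simp add: e rot_inj)
qed

lemma GX5:
  assumes V: "a < n" "b < n" "i < n" "k < n" "x < n" "y < n" "f < n" "g < n" "v < n"
    and h: "crosses (a,b) (i,k)" "crosses (f,g) (i,k)" "before i k (a,b) (f,g)" "before i k (f,g) (x,y)"
      "v \<in> {a,b}" "v \<in> {x,y}"
  shows "v \<in> {f,g}"
proof -
  have z: "0 = rot n i i" by (simp add: rot_self)
  have e: "\<And>p q s t. p < n \<Longrightarrow> q < n \<Longrightarrow> s < n \<Longrightarrow> t < n \<Longrightarrow>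
     crosses (rot n i p, rot n i q) (rot n i s, rot n i t) = crosses (p,q) (s,t)"
    using rot_cross V(3) by blast
  have b: "before (rot n i i) (rot n i k) (rot n i a, rot n i b) (rot n i f, rot n i g)"
     "before (rot n i i) (rot n i k) (rot n i f, rot n i g) (rot n i x, rot n i y)"
    using rot_bef V h(3,4) by blast+
  have m: "rot n i v \<in> {rot n i a, rot n i b}" "rot n i v \<in> {rot n i x, rot n i y}" using h(5,6) by auto
  have "rot n i v \<in> {rot n i f, rot n i g}"
    using G5_0[of "rot n i a" "rot n i b" "rot n i k" "rot n i f" "rot n i g" "rot n i x" "rot n i y" "rot n i v", unfolded z] h V b m
    by (simp add: e)
  then show ?thesis using V by (auto simp: rot_inj)
qed

lemma GX7:
  assumes V: "x < n" "y < n" "i < n" "k < n" "g1 < n" "g2 < n" "h1 < n" "h2 < n"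
    and h: "crosses (x,y) (i,k)" "crosses (g1,g2) (i,x)"
    "crosses (h1,h2) (i,g1)" "\<not> crosses (h1,h2) (g1,g2)"
  shows "crosses (h1,h2) (i,x)"
proof -
  have z: "0 = rot n i i" by (simp add: rot_self)
  have e: "\<And>p q s t. p < n \<Longrightarrow> q < n \<Longrightarrow> s < n \<Longrightarrow> t < n \<Longrightarrow>
     crosses (rot n i p, rot n i q) (rot n i s, rot n i t) = crosses (p,q) (s,t)"
    using rot_cross V(3) by blast
  show ?thesis
    using G7_0[of "rot n i x" "rot n i y" "rot n i k" "rot n i g1" "rot n i g2" "rot n i h1" "rot n i h2", unfolded z] h V
    by (simp add: e)
qed



definition noX :: "(nat \<times> nat) set \<Rightarrow> nat \<times> nat \<Rightarrow> bool" where
  "noX D e \<longleftrightarrow> (\<forall>d\<in>D. \<not> crosses e d)"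

definition trl :: "nat \<Rightarrow> (nat \<times> nat) set \<Rightarrow> nat \<Rightarrow> nat \<Rightarrow> nat list \<Rightarrow> bool" where
  "trl n D i k p \<longleftrightarrow>
     length p \<ge> 2 \<and> last p = k \<and> set p \<subseteq> {..<n}
     \<and> (\<forall>a < length p - 1. p ! a \<noteq> p ! (a + 1))
     \<and> (\<forall>a < length p - 1. \<forall>b < length p - 1. a \<noteq> b \<longrightarrow>
            {p ! a, p ! (a + 1)} \<noteq> {p ! b, p ! (b + 1)})
     \<and> (\<forall>a < length p - 1. \<forall>d\<in>D. \<not> crosses (p ! a, p ! (a + 1)) d)
     \<and> (\<forall>a < length p - 1. odd a \<longrightarrow>
            (p ! a, p ! (a + 1)) \<in> D \<and> crosses (p ! a, p ! (a + 1)) (i, k))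
     \<and> (\<forall>a < length p - 1. \<forall>b < length p - 1. odd a \<longrightarrow> odd b \<longrightarrow> a < b \<longrightarrow>
            before i k (p ! a, p ! (a + 1)) (p ! b, p ! (b + 1)))"

lemma tp_trl: "is_tpath n D i k p \<longleftrightarrow> hd p = i \<and> i \<noteq> k \<and> trl n D i k p"
  unfolding is_tpath_def trl_def by blast

definition nouse :: "nat list \<Rightarrow> nat set \<Rightarrow> bool" where
  "nouse q s \<longleftrightarrow> (\<forall>a < length q - 1. {q ! a, q ! (a + 1)} \<noteq> s)"

definition allafter :: "nat \<Rightarrow> nat \<Rightarrow> nat \<times> nat \<Rightarrow> nat list \<Rightarrow> bool" where
  "allafter i k e q \<longleftrightarrow> (\<forall>a < length q - 1. odd a \<longrightarrow> before i k e (q ! a, q ! (a + 1)))"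

lemma trl_cons:
  assumes "length q \<ge> 2"
  shows "trl n D i k (x # y # q) \<longleftrightarrow>
    x < n \<and> y < n \<and> x \<noteq> y \<and> y \<noteq> q ! 0 \<and> noX D (x,y) \<and> noX D (y, q ! 0)
    \<and> (y, q ! 0) \<in> D \<and> crosses (y, q ! 0) (i,k) \<and> {x,y} \<noteq> {y, q ! 0}
    \<and> nouse q {x,y} \<and> nouse q {y, q ! 0} \<and> allafter i k (y, q ! 0) q \<and> trl n D i k q"
proof -
  have L: "length (x # y # q) - 1 = Suc (Suc (length q - 1))" using assms by simp
  have lq: "last (x # y # q) = last q" using assms by (cases q) auto
  show ?thesis
    unfolding trl_def[of n D i k "x # y # q"] nouse_def allafter_def noX_def L lq
    unfolding All_less_Suc2
    using assms by (auto simp: trl_def)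
qed


lemma cr_dist: "crosses (x,y) (u,w) \<Longrightarrow> x \<noteq> u \<and> x \<noteq> w \<and> y \<noteq> u \<and> y \<noteq> w \<and> x \<noteq> y \<and> u \<noteq> w"
  by (auto simp: crosses_def)

lemma trl_two: "trl n D i k [x,y] \<longleftrightarrow> x < n \<and> y < n \<and> y = k \<and> x \<noteq> y \<and> noX D (x,y)"
  unfolding trl_def noX_def by (auto simp: less_Suc_eq)

lemma trl_three: "\<not> trl n D i k [x,y,z]"
proof
  assume t: "trl n D i k [x,y,z]"
  then have "z = k" by (simp add: trl_def)
  moreover have "crosses (y,z) (i,k)" using t unfolding trl_def by (auto dest: spec[of _ 1])
  ultimately show False using cr_dist by blast
qed

lemma trl_len: "trl n D i k p \<Longrightarrow> length p \<ge> 2" by (simp add: trl_def)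
lemma trl_last: "trl n D i k p \<Longrightarrow> last p = k" by (simp add: trl_def)
lemma trl_set: "trl n D i k p \<Longrightarrow> set p \<subseteq> {..<n}" by (simp add: trl_def)
lemma trl_odd: "trl n D i k p \<Longrightarrow> a < length p - 1 \<Longrightarrow> odd a \<Longrightarrow>
   (p ! a, p ! (a + 1)) \<in> D \<and> crosses (p ! a, p ! (a + 1)) (i, k)"
  by (simp add: trl_def)
lemma trl_neq: "trl n D i k p \<Longrightarrow> a < length p - 1 \<Longrightarrow> p ! a \<noteq> p ! (a + 1)"
  by (simp add: trl_def)
lemma trl_dist: "trl n D i k p \<Longrightarrow> a < length p - 1 \<Longrightarrow> b < length p - 1 \<Longrightarrow> a \<noteq> b \<Longrightarrow>
   {p ! a, p ! (a + 1)} \<noteq> {p ! b, p ! (b + 1)}"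
  by (simp add: trl_def)
lemma trl_bef: "trl n D i k p \<Longrightarrow> a < length p - 1 \<Longrightarrow> b < length p - 1 \<Longrightarrow> odd a \<Longrightarrow> odd b \<Longrightarrow> a < b \<Longrightarrow>
   before i k (p ! a, p ! (a + 1)) (p ! b, p ! (b + 1))"
  by (simp add: trl_def)

lemma before_any: "before i k = before j k"
  by (intro ext) (simp add: before_def)

lemma trl_retarget:
  assumes "trl n D j k q"
    and "\<forall>a < length q - 1. odd a \<longrightarrow> crosses (q ! a, q ! (a + 1)) (i, k)"
  shows "trl n D i k q"
  using assms unfolding trl_def before_any[of j k i] by auto

lemma trl_vert:
  assumes t: "trl n D j k q" and o: "\<forall>a < length q - 1. odd a \<longrightarrow> q ! a \<noteq> v \<and> q ! (a + 1) \<noteq> v"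
    and kv: "k \<noteq> v" and m: "0 < m" "m < length q"
  shows "q ! m \<noteq> v"
proof -
  have L: "length q \<ge> 2" "last q = k" using t by (simp_all add: trl_def)
  consider "m = length q - 1" | "m < length q - 1" "odd m" | "m < length q - 1" "even m"
    using m by linarith
  then show ?thesis
  proof cases
    case 1
    have "q \<noteq> []" using L by auto
    then have "q ! m = last q" using 1 by (simp add: last_conv_nth)
    then show ?thesis using L kv by simp
  next
    case 2 then show ?thesis using o by blast
  next
    case 3
    then have "odd (m - 1)" "m - 1 < length q - 1" using m by auto
    then have "q ! (m - 1 + 1) \<noteq> v" using o by blast
    then show ?thesis using m by simp
  qed
qed

lemma nouse_avoid:
  assumes "\<forall>m < length q. q ! m \<noteq> v"
  shows "nouse q {v,w}"
  unfolding nouse_def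
proof (intro allI impI)
  fix a assume "a < length q - 1"
  then have "q ! a \<noteq> v" "q ! (a + 1) \<noteq> v" using assms by auto
  then show "{q ! a, q ! (a + 1)} \<noteq> {v, w}" by (auto simp: doubleton_eq_iff)
qed

lemma dis_D: "dissection n D \<Longrightarrow> (x,y) \<in> D \<Longrightarrow> x < n \<and> y < n \<and> x \<noteq> y \<and> (y,x) \<in> D"
  unfolding dissection_def internal_diag_def by auto

lemma dis_nc: "dissection n D \<Longrightarrow> d \<in> D \<Longrightarrow> e \<in> D \<Longrightarrow> \<not> crosses d e"
  unfolding dissection_def by auto

lemma dis_noX: "dissection n D \<Longrightarrow> d \<in> D \<Longrightarrow> noX D d"
  unfolding noX_def using dis_nc by blast

lemma dis_fin: "dissection n D \<Longrightarrow> finite D"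
proof -
  assume d: "dissection n D"
  have "D \<subseteq> {..<n} \<times> {..<n}" using dis_D[OF d] by auto
  then show ?thesis by (rule finite_subset) auto
qed

lemma tp_len3:
  assumes "is_tpath n D i k p" "\<not> noX D (i,k)"
  shows "\<exists>y q. p = i # y # q \<and> length q \<ge> 2"
proof -
  have t: "hd p = i" "i \<noteq> k" "trl n D i k p" using assms(1) tp_trl by blast+
  have L: "length p \<ge> 2" using t(3) trl_len by blast
  obtain y q where p: "p = i # y # q" using t(1) L by (cases p; cases "tl p") auto
  have q0: "q \<noteq> []"
  proof
    assume "q = []"
    then have "trl n D i k [i,y]" using t(3) p by simp
    then show False using assms(2) by (auto simp: trl_two)
  qed
  have q1: "length q \<noteq> 1"
  proof
    assume "length q = 1"
    then obtain z where "q = [z]" by (cases q) auto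
    then show False using t(3) p trl_three by simp
  qed
  have "length q > 0" using q0 by simp
  then have "length q \<ge> 2" using q1 by linarith
  then show ?thesis using p by blast
qed


lemma trl_len4:
  assumes "trl n D j k (x # y # q)" "y \<noteq> k"
  shows "length q \<ge> 2"
proof -
  have q0: "q \<noteq> []"
  proof
    assume "q = []"
    then show False using assms trl_last by fastforce
  qed
  have q1: "length q \<noteq> 1"
  proof
    assume "length q = 1"
    then obtain z where "q = [z]" by (cases q) auto
    then show False using assms(1) trl_three by simp
  qed
  have "length q > 0" using q0 by simp
  then show "length q \<ge> 2" using q1 by linarith
qed

lemma odd_avoid:
  assumes "\<forall>a < length q - 1. odd a \<longrightarrow> crosses (q ! a, q ! (a + 1)) (v, w)"
  shows "\<forall>a < length q - 1. odd a \<longrightarrow> q ! a \<noteq> v \<and> q ! (a + 1) \<noteq> v"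
  using assms cr_dist by blast

lemma is_unit_uinv: "is_unit x \<Longrightarrow> x * uinv x = 1 \<and> uinv x * x = 1"
  unfolding is_unit_def uinv_def by (rule someI_ex)

lemma tpaths_fin: "finite (tpaths n D i k)"
proof -
  have "tpaths n D i k \<subseteq> {p. set p \<subseteq> {..<n} \<and> length p \<le> n * n + 1}"
  proof
    fix p assume "p \<in> tpaths n D i k"
    then have t: "trl n D i k p" by (simp add: tpaths_def tp_trl)
    let ?f = "\<lambda>a. (p ! a, p ! (a + 1))"
    have inj: "inj_on ?f {..<length p - 1}"
    proof (rule inj_onI)
      fix x y assume "x \<in> {..<length p - 1}" "y \<in> {..<length p - 1}" "?f x = ?f y"
      then show "x = y" using trl_dist[OF t, of x y] by auto
    qed
    have sub: "?f ` {..<length p - 1} \<subseteq> {..<n} \<times> {..<n}"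
    proof
      fix z assume "z \<in> ?f ` {..<length p - 1}"
      then obtain x where x: "x < length p - 1" "z = ?f x" by auto
      then have "p ! x \<in> set p" "p ! (x + 1) \<in> set p" by auto
      then have "p ! x < n" "p ! (x + 1) < n" using trl_set[OF t] by auto
      then show "z \<in> {..<n} \<times> {..<n}" using x by auto
    qed
    have "card {..<length p - 1} \<le> card ({..<n} \<times> {..<n})"
      using card_inj_on_le[OF inj sub] by simp
    then have "length p - 1 \<le> n * n" by (simp add: card_cartesian_product)
    then show "p \<in> {p. set p \<subseteq> {..<n} \<and> length p \<le> n * n + 1}" using trl_set[OF t] by auto
  qed
  moreover have "finite {p. set p \<subseteq> {..<n} \<and> length p \<le> n * n + 1}"
    by (rule finite_lists_length_le) simp
  ultimately show ?thesis by (rule finite_subset)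
qed



context
  fixes n :: nat and D :: "(nat \<times> nat) set" and i k a b :: nat
  assumes dis: "dissection n D" and ik: "i < n" "k < n"
    and ab: "(a,b) \<in> D" "crosses (a,b) (i,k)"
    and na: "noX D (i,a)" and nb: "noX D (i,b)"
begin

lemma ab_basic: "a < n" "b < n" "a \<noteq> b" "(b,a) \<in> D" "i \<noteq> k" "i \<noteq> a" "i \<noteq> b" "k \<noteq> a" "k \<noteq> b"
  using dis_D[OF dis ab(1)] cr_dist[OF ab(2)] by auto

lemma Dlt: "(x,y) \<in> D \<Longrightarrow> x < n \<and> y < n" using dis_D dis by blast

lemma C1: "(x,y) \<in> D \<Longrightarrow> crosses (x,y) (b,k) \<Longrightarrow> crosses (x,y) (i,k)"
  using GX1[of a n b i k x y] ab ab_basic ik Dlt[of x y] dis_nc[OF dis _ ab(1)] by blast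

lemma C2: "(x,y) \<in> D \<Longrightarrow> crosses (x,y) (i,k) \<Longrightarrow> {x,y} \<noteq> {a,b} \<Longrightarrow> before i k (a,b) (x,y)"
proof -
  assume h: "(x,y) \<in> D" "crosses (x,y) (i,k)" "{x,y} \<noteq> {a,b}"
  have "\<not> crosses (i,a) (x,y)" "\<not> crosses (i,b) (x,y)" using na nb h(1) by (auto simp: noX_def)
  then show ?thesis using GX2[of a n b i k x y] ab ab_basic ik Dlt[OF h(1)] h by blast
qed

lemma C3: "(x,y) \<in> D \<Longrightarrow> crosses (x,y) (i,k) \<Longrightarrow> x \<noteq> b \<Longrightarrow> y \<noteq> b \<Longrightarrow> crosses (x,y) (b,k)"
proof -
  assume h: "(x,y) \<in> D" "crosses (x,y) (i,k)" "x \<noteq> b" "y \<noteq> b"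
  then have "{x,y} \<noteq> {a,b}" by auto
  then have "before i k (a,b) (x,y)" using C2 h by blast
  then show ?thesis using GX3[of a n b i k x y] ab ab_basic ik Dlt[OF h(1)] h by blast
qed

lemma C4: "(x,y) \<in> D \<Longrightarrow> crosses (x,y) (i,k) \<Longrightarrow> x \<noteq> a \<Longrightarrow> x \<noteq> b \<Longrightarrow> crosses (i,x) (a,b)"
proof -
  assume h: "(x,y) \<in> D" "crosses (x,y) (i,k)" "x \<noteq> a" "x \<noteq> b"
  then have "{x,y} \<noteq> {a,b}" by auto
  then have "before i k (a,b) (x,y)" using C2 h by blast
  then show ?thesis using GX4[of a n b i k x y] ab ab_basic ik Dlt[OF h(1)] h by blast
qed

lemma C5: "(f,g) \<in> D \<Longrightarrow> crosses (f,g) (i,k) \<Longrightarrow> (x,y) \<in> D \<Longrightarrow> crosses (x,y) (i,k)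
   \<Longrightarrow> before i k (f,g) (x,y) \<Longrightarrow> b \<in> {x,y} \<Longrightarrow> b \<in> {f,g}"
proof -
  assume h: "(f,g) \<in> D" "crosses (f,g) (i,k)" "(x,y) \<in> D" "crosses (x,y) (i,k)"
     "before i k (f,g) (x,y)" "b \<in> {x,y}"
  show "b \<in> {f,g}"
  proof (cases "{f,g} = {a,b}")
    case True then show ?thesis by auto
  next
    case False
    then have "before i k (a,b) (f,g)" using C2 h by blast
    then show ?thesis using GX5[of a n b i k x y f g b] ab ab_basic ik Dlt[OF h(1)] Dlt[OF h(3)] h by blast
  qed
qed

lemma notnoX: "\<not> noX D (i,k)"
  using ab cr_sym unfolding noX_def by blast

lemma F1a:
  assumes q: "is_tpath n D b k q" and q1: "q ! 1 \<noteq> a"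
  shows "is_tpath n D i k (i # a # q)"
proof -
  have t: "hd q = b" "b \<noteq> k" "trl n D b k q" using q tp_trl by blast+
  have L: "length q \<ge> 2" using t(3) trl_len by blast
  have q0: "q ! 0 = b" using t(1) L by (cases q) auto
  have O: "\<forall>a' < length q - 1. odd a' \<longrightarrow> (q!a', q!(a'+1)) \<in> D \<and> crosses (q!a', q!(a'+1)) (b,k)"
    using trl_odd[OF t(3)] by blast
  have O1: "\<forall>a' < length q - 1. odd a' \<longrightarrow> crosses (q!a', q!(a'+1)) (i,k)"
    using O C1 by blast
  have T: "trl n D i k q" using trl_retarget[OF t(3) O1] .
  have Vi: "\<forall>m < length q. q ! m \<noteq> i"
  proof (intro allI impI)
    fix m assume m: "m < length q"
    show "q ! m \<noteq> i"
    proof (cases "m = 0")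
      case True then show ?thesis using q0 ab_basic by simp
    next
      case False
      then show ?thesis using trl_vert[OF t(3) odd_avoid[OF O1], of m] ab_basic m by auto
    qed
  qed
  have Ob: "\<forall>a' < length q - 1. odd a' \<longrightarrow> crosses (q!a', q!(a'+1)) (b,k)" using O by blast
  have Vb: "\<And>m. 0 < m \<Longrightarrow> m < length q \<Longrightarrow> q ! m \<noteq> b"
    using trl_vert[OF t(3) odd_avoid[OF Ob]] t(2) by auto
  have N1: "nouse q {i,a}" using nouse_avoid[OF Vi] .
  have N2: "nouse q {a,b}"
    unfolding nouse_def
  proof (intro allI impI)
    fix a' assume a': "a' < length q - 1"
    show "{q ! a', q ! (a' + 1)} \<noteq> {a, b}"
    proof (cases "a' = 0")
      case True
      have "q ! 1 \<noteq> b" using Vb L by auto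
      then show ?thesis using True q0 q1 by (auto simp: doubleton_eq_iff)
    next
      case False
      then have "q ! a' \<noteq> b" "q ! (a'+1) \<noteq> b" using Vb a' by auto
      then show ?thesis by (auto simp: doubleton_eq_iff)
    qed
  qed
  have AA: "allafter i k (a,b) q"
    unfolding allafter_def
  proof (intro allI impI)
    fix a' assume a': "a' < length q - 1" "odd a'"
    have "(q!a', q!(a'+1)) \<in> D" "crosses (q!a', q!(a'+1)) (i,k)" using O O1 a' by blast+
    moreover have "q!a' \<noteq> b" "q!(a'+1) \<noteq> b" using odd_avoid[OF Ob] a' by blast+
    then have "{q!a', q!(a'+1)} \<noteq> {a,b}" by (auto simp: doubleton_eq_iff)
    ultimately show "before i k (a,b) (q!a', q!(a'+1))" using C2 by blast
  qed
  have "trl n D i k (i # a # q)"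
    unfolding trl_cons[OF L] q0
    using ik ab ab_basic na dis_noX[OF dis ab(1)] N1 N2 AA T by (auto simp: doubleton_eq_iff)
  then show ?thesis using tp_trl ab_basic by auto
qed

lemma F1b:
  assumes p: "is_tpath n D i k (i # a # q)" and q0: "q ! 0 = b"
  shows "is_tpath n D b k q \<and> q ! 1 \<noteq> a"
proof -
  have tp: "trl n D i k (i # a # q)" using p tp_trl by blast
  have L: "length q \<ge> 2" using trl_len4[OF tp] ab_basic by blast
  have C: "nouse q {a,b}" "trl n D i k q"
    using tp unfolding trl_cons[OF L] q0 by blast+
  note T = C(2)
  have O: "\<And>a'. a' < length q - 1 \<Longrightarrow> odd a' \<Longrightarrow> (q!a', q!(a'+1)) \<in> D \<and> crosses (q!a', q!(a'+1)) (i,k)"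
    using trl_odd[OF T] by blast
  have Bav: "\<forall>a' < length q - 1. odd a' \<longrightarrow> q!a' \<noteq> b \<and> q!(a'+1) \<noteq> b"
  proof (intro allI impI)
    fix a' assume a': "a' < length q - 1" "odd a'"
    then have a1: "1 \<le> a'" by (cases a') auto
    have s1: "q ! 1 \<noteq> b" using trl_neq[OF T, of 0] q0 L by auto
    have s2: "q ! 2 \<noteq> b"
    proof
      assume "q ! 2 = b"
      then have "{q ! 0, q ! (0 + 1)} = {q ! 1, q ! (1 + 1)}" using q0 by (auto simp: numeral_2_eq_2)
      then show False using trl_dist[OF T, of 0 1] a' a1 by linarith
    qed
    show "q!a' \<noteq> b \<and> q!(a'+1) \<noteq> b"
    proof (cases "a' = 1")
      case True then show ?thesis using s1 s2 by (simp add: numeral_2_eq_2)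
    next
      case False
      then have "1 < a'" using a1 by simp
      then have bf: "before i k (q!1, q!(1+1)) (q!a', q!(a'+1))" using trl_bef[OF T, of 1 a'] a' by simp
      have f: "(q!1, q!(1+1)) \<in> D" "crosses (q!1, q!(1+1)) (i,k)" using O[of 1] a' \<open>1 < a'\<close> by auto
      have e: "(q!a', q!(a'+1)) \<in> D" "crosses (q!a', q!(a'+1)) (i,k)" using O a' by auto
      show ?thesis
      proof (rule ccontr)
        assume "\<not> ?thesis"
        then have "b \<in> {q!a', q!(a'+1)}" by auto
        then have "b \<in> {q!1, q!(1+1)}" using C5[OF f e bf] by blast
        then show False using s1 s2 by (auto simp: numeral_2_eq_2)
      qed
    qed
  qed
  have Cb: "\<forall>a' < length q - 1. odd a' \<longrightarrow> crosses (q!a', q!(a'+1)) (b,k)"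
    using O Bav C3 by blast
  have T': "trl n D b k q" using trl_retarget[OF T Cb] .
  have h: "hd q = b" using q0 L by (cases q) auto
  have "{q ! 0, q ! (0 + 1)} \<noteq> {a, b}" using C(1) L unfolding nouse_def by auto
  then have "q ! 1 \<noteq> a" using q0 by (auto simp: doubleton_eq_iff)
  then show ?thesis using T' h ab_basic tp_trl by blast
qed

lemma F2a:
  assumes p: "is_tpath n D b k (b # a # q)"
  shows "is_tpath n D i k (i # a # q) \<and> q ! 0 \<noteq> b"
proof -
  have tp: "trl n D b k (b # a # q)" "b \<noteq> k" using p tp_trl by blast+
  have L: "length q \<ge> 2" using trl_len4[OF tp(1)] ab_basic by blast
  define z where "z = q ! 0"
  have C: "noX D (a,z)" "(a,z) \<in> D" "crosses (a,z) (b,k)" "{b,a} \<noteq> {a,z}" "nouse q {a,z}"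
    "allafter b k (a,z) q" "trl n D b k q" "a \<noteq> z"
    using tp(1) unfolding trl_cons[OF L] z_def by blast+
  have zb: "z \<noteq> b" using C(4) by auto
  have az: "crosses (a,z) (i,k)" using C1 C(2,3) by blast
  have zi: "z \<noteq> i" using cr_dist[OF az] by blast
  have O: "\<forall>a' < length q - 1. odd a' \<longrightarrow> crosses (q!a', q!(a'+1)) (i,k)"
    using trl_odd[OF C(7)] C1 by blast
  have T: "trl n D i k q" using trl_retarget[OF C(7) O] .
  have Vi: "\<forall>m < length q. q ! m \<noteq> i"
  proof (intro allI impI)
    fix m assume m: "m < length q"
    show "q ! m \<noteq> i"
    proof (cases "m = 0")
      case True then show ?thesis using zi z_def by simp
    next
      case False
      then show ?thesis using trl_vert[OF C(7) odd_avoid[OF O], of m] ab_basic m by auto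
    qed
  qed
  have N1: "nouse q {i,a}" using nouse_avoid[OF Vi] .
  have AA: "allafter i k (a,z) q" using C(6) unfolding allafter_def before_any[of b k i] .
  have "trl n D i k (i # a # q)"
    unfolding trl_cons[OF L] z_def[symmetric]
    using ik ab_basic na C N1 AA T az zi by (auto simp: doubleton_eq_iff)
  then show ?thesis using tp_trl ab_basic zb z_def by auto
qed

lemma F2b:
  assumes p: "is_tpath n D i k (i # a # q)" and zb: "q ! 0 \<noteq> b"
  shows "is_tpath n D b k (b # a # q)"
proof -
  have tp: "trl n D i k (i # a # q)" using p tp_trl by blast
  have L: "length q \<ge> 2" using trl_len4[OF tp] ab_basic by blast
  define z where "z = q ! 0"
  have C: "noX D (a,z)" "(a,z) \<in> D" "crosses (a,z) (i,k)" "nouse q {a,z}"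
    "allafter i k (a,z) q" "trl n D i k q" "a \<noteq> z"
    using tp unfolding trl_cons[OF L] z_def by blast+
  have zb': "z \<noteq> b" using zb z_def by simp
  have O: "\<And>a'. a' < length q - 1 \<Longrightarrow> odd a' \<Longrightarrow> (q!a', q!(a'+1)) \<in> D \<and> crosses (q!a', q!(a'+1)) (i,k)"
    using trl_odd[OF C(6)] by blast
  have Bav: "\<forall>a' < length q - 1. odd a' \<longrightarrow> q!a' \<noteq> b \<and> q!(a'+1) \<noteq> b"
  proof (intro allI impI)
    fix a' assume a': "a' < length q - 1" "odd a'"
    have bf: "before i k (a,z) (q!a', q!(a'+1))" using C(5) a' unfolding allafter_def by blast
    show "q!a' \<noteq> b \<and> q!(a'+1) \<noteq> b"
    proof (rule ccontr)
      assume "\<not> ?thesis"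
      then have "b \<in> {q!a', q!(a'+1)}" by auto
      then have "b \<in> {a,z}" using C5[OF C(2,3) _ _ bf] O[OF a'] by blast
      then show False using zb' ab_basic by auto
    qed
  qed
  have Cb: "\<forall>a' < length q - 1. odd a' \<longrightarrow> crosses (q!a', q!(a'+1)) (b,k)"
    using O Bav C3 by blast
  have T': "trl n D b k q" using trl_retarget[OF C(6) Cb] .
  have Vb: "\<forall>m < length q. q ! m \<noteq> b"
  proof (intro allI impI)
    fix m assume m: "m < length q"
    show "q ! m \<noteq> b"
    proof (cases "m = 0")
      case True then show ?thesis using zb by simp
    next
      case False
      then show ?thesis using trl_vert[OF C(6) Bav, of m] ab_basic m by auto
    qed
  qed
  have N: "nouse q {b,a}" using nouse_avoid[OF Vb] .
  have azb: "crosses (a,z) (b,k)" using C3 C(2,3) ab_basic zb' by blast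
  have AA: "allafter b k (a,z) q" using C(5) unfolding allafter_def before_any[of i k b] .
  have "trl n D b k (b # a # q)"
    unfolding trl_cons[OF L] z_def[symmetric]
    using ab_basic dis_noX[OF dis ab_basic(4)] C N AA T' azb zb' by (auto simp: doubleton_eq_iff)
  then show ?thesis using tp_trl ab_basic by auto
qed

lemma F0:
  assumes p: "is_tpath n D i k p"
  shows "\<exists>q. length q \<ge> 2 \<and> (p = i # a # q \<or> p = i # b # q)"
proof -
  obtain y q where pq: "p = i # y # q" "length q \<ge> 2" using tp_len3[OF p notnoX] by blast
  have tp: "trl n D i k (i # y # q)" using p pq tp_trl by blast
  have C: "noX D (i,y)" "(y, q!0) \<in> D" "crosses (y, q!0) (i,k)"
    using tp unfolding trl_cons[OF pq(2)] by blast+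
  have "y \<in> {a,b}"
  proof (rule ccontr)
    assume "y \<notin> {a,b}"
    then have "crosses (i,y) (a,b)" using C4 C(2,3) by blast
    then show False using C(1) ab(1) unfolding noX_def by blast
  qed
  then show ?thesis using pq by blast
qed

end



lemma tp_basic: "is_tpath n D j k q \<Longrightarrow> hd q = j \<and> length q \<ge> 2 \<and> j \<noteq> k"
  unfolding tp_trl using trl_len by blast

definition Sf :: "nat \<Rightarrow> (nat \<times> nat) set \<Rightarrow> (nat \<Rightarrow> nat \<Rightarrow> 'a::ring_1) \<Rightarrow> nat \<Rightarrow> nat \<Rightarrow> 'a" where
  "Sf n D c i k = (\<Sum>p\<in>tpaths n D i k. tweight c p)"

context
  fixes n :: nat and D :: "(nat \<times> nat) set" and i k a b :: nat
  assumes dis: "dissection n D" and ik: "i < n" "k < n"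
    and ab: "(a,b) \<in> D" "crosses (a,b) (i,k)"
    and na: "noX D (i,a)" and nb: "noX D (i,b)"
begin

lemmas F1a' = F1a[OF dis ik ab na nb]
lemmas F1b' = F1b[OF dis ik ab na nb]
lemmas F2a' = F2a[OF dis ik ab na nb]
lemmas F2b' = F2b[OF dis ik ab na nb]
lemmas F0' = F0[OF dis ik ab na nb]
lemmas abb = ab_basic[OF dis ik ab na nb]

lemma half:
  fixes c :: "nat \<Rightarrow> nat \<Rightarrow> 'a::ring_1"
  assumes units: "\<forall>(t,v)\<in>D. is_unit (c t v)"
  shows "(\<Sum>p\<in>{p\<in>tpaths n D i k. p ! 1 = a}. tweight c p) = c i a * uinv (c b a) * Sf n D c b k"
proof -
  let ?W = "tweight c"
  let ?g = "\<lambda>q. c i a * uinv (c b a) * ?W q"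
  define Tb where "Tb = tpaths n D b k"
  define Q1 where "Q1 = {q\<in>Tb. q!1 \<noteq> a}"
  define Q2 where "Q2 = {q\<in>Tb. q!1 = a}"
  define Ta1 where "Ta1 = {p\<in>tpaths n D i k. p!1 = a \<and> p!2 = b}"
  define Ta2 where "Ta2 = {p\<in>tpaths n D i k. p!1 = a \<and> p!2 \<noteq> b}"
  have finb: "finite Tb" unfolding Tb_def by (rule tpaths_fin)
  have fini: "finite (tpaths n D i k)" by (rule tpaths_fin)
  have uba: "uinv (c b a) * c b a = 1" using units abb(4) is_unit_uinv by fastforce
  have S1: "sum ?g Q1 = sum ?W Ta1"
  proof (rule sum.reindex_bij_witness[where j = "\<lambda>q. i # a # q" and i = "drop 2"])
    fix q assume "q \<in> Q1" show "drop 2 (i # a # q) = q" by simp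
  next
    fix q assume q: "q \<in> Q1"
    then have qt: "is_tpath n D b k q" "q!1 \<noteq> a" by (simp_all add: Q1_def Tb_def tpaths_def)
    have h: "hd q = b" "length q \<ge> 2" using tp_basic[OF qt(1)] by blast+
    then have "q!0 = b" by (cases q) auto
    then show "i # a # q \<in> Ta1" using F1a'[OF qt] by (simp add: Ta1_def tpaths_def)
  next
    fix p assume p: "p \<in> Ta1"
    then have pt: "is_tpath n D i k p" "p!1 = a" "p!2 = b" by (simp_all add: Ta1_def tpaths_def)
    obtain q where q: "length q \<ge> 2" "p = i#a#q \<or> p = i#b#q" using F0'[OF pt(1)] by blast
    then have pq: "p = i # a # q" using pt(2) abb by auto
    then show "i # a # drop 2 p = p" by simp
  next
    fix p assume p: "p \<in> Ta1"
    then have pt: "is_tpath n D i k p" "p!1 = a" "p!2 = b" by (simp_all add: Ta1_def tpaths_def)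
    obtain q where q: "length q \<ge> 2" "p = i#a#q \<or> p = i#b#q" using F0'[OF pt(1)] by blast
    then have pq: "p = i # a # q" using pt(2) abb by auto
    have "q!0 = b" using pq pt(3) by simp
    then have "is_tpath n D b k q \<and> q!1 \<noteq> a" using F1b' pt(1) pq by blast
    then show "drop 2 p \<in> Q1" using pq by (simp add: Q1_def Tb_def tpaths_def)
  next
    fix q assume q: "q \<in> Q1"
    then have qt: "is_tpath n D b k q" by (simp add: Q1_def Tb_def tpaths_def)
    have h: "hd q = b" "length q \<ge> 2" using tp_basic[OF qt(1)] by blast+
    then obtain r where "q = b # r" by (cases q) auto
    then show "?W (i # a # q) = ?g q" by simp
  qed
  have S2: "sum ?g Q2 = sum ?W Ta2"
  proof (rule sum.reindex_bij_witness[where j = "\<lambda>q. i # tl q" and i = "\<lambda>p. b # tl p"])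
    fix q assume q: "q \<in> Q2"
    then have qt: "is_tpath n D b k q" by (simp add: Q2_def Tb_def tpaths_def)
    have h: "hd q = b" "length q \<ge> 2" using tp_basic[OF qt(1)] by blast+
    then show "b # tl (i # tl q) = q" by (cases q) auto
  next
    fix q assume q: "q \<in> Q2"
    then have qt: "is_tpath n D b k q" "q!1 = a" by (simp_all add: Q2_def Tb_def tpaths_def)
    have h: "hd q = b" "length q \<ge> 2" using tp_basic[OF qt(1)] by blast+
    then obtain r where r: "q = b # a # r" using qt(2) by (cases q; cases "tl q") auto
    then have "is_tpath n D i k (i # a # r) \<and> r ! 0 \<noteq> b" using F2a' qt(1) by blast
    then show "i # tl q \<in> Ta2" using r by (simp add: Ta2_def tpaths_def)
  next
    fix p assume p: "p \<in> Ta2"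
    then have pt: "is_tpath n D i k p" "p!1 = a" by (simp_all add: Ta2_def tpaths_def)
    obtain q where q: "length q \<ge> 2" "p = i#a#q \<or> p = i#b#q" using F0'[OF pt(1)] by blast
    then have pq: "p = i # a # q" using pt(2) abb by auto
    then show "i # tl (b # tl p) = p" by simp
  next
    fix p assume p: "p \<in> Ta2"
    then have pt: "is_tpath n D i k p" "p!1 = a" "p!2 \<noteq> b" by (simp_all add: Ta2_def tpaths_def)
    obtain q where q: "length q \<ge> 2" "p = i#a#q \<or> p = i#b#q" using F0'[OF pt(1)] by blast
    then have pq: "p = i # a # q" using pt(2) abb by auto
    have "q!0 \<noteq> b" using pq pt(3) by simp
    then have "is_tpath n D b k (b # a # q)" using F2b' pt(1) pq by blast
    then show "b # tl p \<in> Q2" using pq by (simp add: Q2_def Tb_def tpaths_def)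
  next
    fix q assume q: "q \<in> Q2"
    then have qt: "is_tpath n D b k q" "q!1 = a" by (simp_all add: Q2_def Tb_def tpaths_def)
    have h: "hd q = b" "length q \<ge> 2" using tp_basic[OF qt(1)] by blast+
    then obtain r where r: "q = b # a # r" using qt(2) by (cases q; cases "tl q") auto
    have "length r \<ge> 2" using trl_len4[of n D b k b a r] qt(1) r tp_trl abb by blast
    then obtain z r' where zr: "r = z # r'" by (cases r) auto
    have e: "uinv (c b a) * (c b a * X) = X" for X
      by (simp add: mult.assoc[symmetric] uba)
    show "?W (i # tl q) = ?g q" using r zr by (simp add: mult.assoc e)
  qed
  have fa1: "finite Ta1" "finite Ta2" using fini by (simp_all add: Ta1_def Ta2_def)
  have fq: "finite Q1" "finite Q2" using finb by (simp_all add: Q1_def Q2_def)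
  have U1: "{p\<in>tpaths n D i k. p ! 1 = a} = Ta1 \<union> Ta2" by (auto simp: Ta1_def Ta2_def)
  have U2: "Tb = Q1 \<union> Q2" by (auto simp: Q1_def Q2_def)
  have D1: "Ta1 \<inter> Ta2 = {}" by (auto simp: Ta1_def Ta2_def)
  have D2: "Q1 \<inter> Q2 = {}" by (auto simp: Q1_def Q2_def)
  have "(\<Sum>p\<in>{p\<in>tpaths n D i k. p ! 1 = a}. ?W p) = sum ?W Ta1 + sum ?W Ta2"
    unfolding U1 by (rule sum.union_disjoint[OF fa1 D1])
  also have "\<dots> = sum ?g Q1 + sum ?g Q2" using S1 S2 by simp
  also have "\<dots> = sum ?g Tb"
    unfolding U2 by (rule sum.union_disjoint[OF fq D2, symmetric])
  also have "\<dots> = c i a * uinv (c b a) * Sf n D c b k"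
    by (simp add: Sf_def Tb_def sum_distrib_left)
  finally show ?thesis .
qed

end



lemma FRl:
  fixes c :: "nat \<Rightarrow> nat \<Rightarrow> 'a::ring_1"
  assumes dis: "dissection n D" and ik: "i < n" "k < n" and ab: "(a,b) \<in> D" "crosses (a,b) (i,k)"
    and na: "noX D (i,a)" and nb: "noX D (i,b)" and units: "\<forall>(t,v)\<in>D. is_unit (c t v)"
  shows "Sf n D c i k = c i a * uinv (c b a) * Sf n D c b k + c i b * uinv (c a b) * Sf n D c a k"
proof -
  have ab': "(b,a) \<in> D" "crosses (b,a) (i,k)" using dis_D[OF dis ab(1)] ab(2) cr_swap by blast+
  have abne: "a \<noteq> b" using dis_D[OF dis ab(1)] by simp
  note h1 = half[OF dis ik ab na nb units]
  note h2 = half[OF dis ik ab' nb na units]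
  have U: "tpaths n D i k = {p\<in>tpaths n D i k. p!1 = a} \<union> {p\<in>tpaths n D i k. p!1 = b}"
  proof
    show "tpaths n D i k \<subseteq> {p\<in>tpaths n D i k. p!1 = a} \<union> {p\<in>tpaths n D i k. p!1 = b}"
    proof
      fix p assume p: "p \<in> tpaths n D i k"
      then obtain q where "p = i # a # q \<or> p = i # b # q"
        using F0[OF dis ik ab na nb] by (auto simp: tpaths_def)
      then show "p \<in> {p\<in>tpaths n D i k. p!1 = a} \<union> {p\<in>tpaths n D i k. p!1 = b}" using p by auto
    qed
  qed auto
  have fin: "finite {p\<in>tpaths n D i k. p!1 = a}" "finite {p\<in>tpaths n D i k. p!1 = b}"
    using tpaths_fin by auto
  have dj: "{p\<in>tpaths n D i k. p!1 = a} \<inter> {p\<in>tpaths n D i k. p!1 = b} = {}" using abne by auto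
  have "Sf n D c i k = (\<Sum>p\<in>{p\<in>tpaths n D i k. p!1 = a}. tweight c p) + (\<Sum>p\<in>{p\<in>tpaths n D i k. p!1 = b}. tweight c p)"
    unfolding Sf_def by (subst U) (rule sum.union_disjoint[OF fin dj])
  then show ?thesis using h1 h2 by simp
qed

lemma tp_noX:
  assumes "noX D (i,k)" "i \<noteq> k" "i < n" "k < n"
  shows "tpaths n D i k = {[i,k]}"
proof
  show "tpaths n D i k \<subseteq> {[i,k]}"
  proof
    fix p assume "p \<in> tpaths n D i k"
    then have t: "hd p = i" "trl n D i k p" by (simp_all add: tpaths_def tp_trl)
    have L: "length p \<ge> 2" using trl_len[OF t(2)] .
    obtain u r where ur: "p = u # r" using L by (cases p) auto
    obtain y q where yq: "r = y # q" using L ur by (cases r) auto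
    have p: "p = i # y # q" using ur yq t(1) by simp
    have "q = []"
    proof (rule ccontr)
      assume q: "q \<noteq> []"
      show False
      proof (cases "length q = 1")
        case True
        then obtain z where "q = [z]" by (cases q) auto
        then show False using t(2) p trl_three by simp
      next
        case False
        have "length q > 0" using q by simp
        then have L: "length q \<ge> 2" using False by linarith
        have "(y, q!0) \<in> D" "crosses (y, q!0) (i,k)" using t(2) unfolding p trl_cons[OF L] by blast+
        then show False using assms(1) cr_sym unfolding noX_def by blast
      qed
    qed
    then show "p \<in> {[i,k]}" using t(2) p trl_last by fastforce
  qed
next
  have "is_tpath n D i k [i,k]" unfolding tp_trl using assms by (simp add: trl_two)
  then show "{[i,k]} \<subseteq> tpaths n D i k" by (simp add: tpaths_def)
qed

lemma Sf_noX: "noX D (i,k) \<Longrightarrow> i \<noteq> k \<Longrightarrow> i < n \<Longrightarrow> k < n \<Longrightarrow> Sf n D c i k = c i k"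
  by (simp add: Sf_def tp_noX)

lemma Sf_diag: "Sf n D c i i = 0"
  by (simp add: Sf_def tpaths_def is_tpath_def)

definition cnt :: "(nat \<times> nat) set \<Rightarrow> nat \<Rightarrow> nat \<Rightarrow> nat" where
  "cnt D i k = card {e\<in>D. crosses e (i,k)}"

lemma cnt_sym: "cnt D i k = cnt D k i"
  unfolding cnt_def using cr_swap2 by metis

lemma cnt_less:
  assumes dis: "dissection n D" and ab: "(a,b) \<in> D" "crosses (a,b) (i,k)" and ik: "i < n" "k < n"
  shows "cnt D b k < cnt D i k"
proof -
  have fin: "finite {e\<in>D. crosses e (i,k)}" using dis_fin[OF dis] by simp
  have sub: "{e\<in>D. crosses e (b,k)} \<subseteq> {e\<in>D. crosses e (i,k)}"
  proof
    fix e assume e: "e \<in> {e\<in>D. crosses e (b,k)}"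
    obtain x y where xy: "e = (x,y)" by (cases e)
    have "x < n" "y < n" using dis_D[OF dis] e xy by auto
    moreover have "\<not> crosses (x,y) (a,b)" using dis_nc[OF dis] e xy ab(1) by auto
    moreover have "a < n" "b < n" using dis_D[OF dis ab(1)] by auto
    ultimately have "crosses (x,y) (i,k)" using GX1[of a n b i k x y] ab ik e xy by auto
    then show "e \<in> {e\<in>D. crosses e (i,k)}" using e xy by auto
  qed
  have "(a,b) \<in> {e\<in>D. crosses e (i,k)}" "(a,b) \<notin> {e\<in>D. crosses e (b,k)}"
    using ab cr_dist[of a b b k] by auto
  then have "{e\<in>D. crosses e (b,k)} \<subset> {e\<in>D. crosses e (i,k)}" using sub by blast
  then show ?thesis unfolding cnt_def using psubset_card_mono[OF fin] by blast
qed

lemma first_exists: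
  assumes dis: "dissection n D" and ik: "i < n" "k < n" and xy: "(x,y) \<in> D" "crosses (x,y) (i,k)"
  shows "\<exists>a b. (a,b) \<in> D \<and> crosses (a,b) (i,k) \<and> noX D (i,a) \<and> noX D (i,b)"
proof -
  define \<mu> where "\<mu> = (\<lambda>x y. card {g\<in>D. crosses g (i,x) \<or> crosses g (i,y)})"
  have musym: "\<mu> x y = \<mu> y x" for x y unfolding \<mu>_def by metis
  have fin: "finite {g\<in>D. crosses g (i,x) \<or> crosses g (i,y)}" for x y using dis_fin[OF dis] by simp
  have key: "crosses (g1,g2) (i,k) \<and> \<mu> g1 g2 < \<mu> x y"
    if h: "(x,y) \<in> D" "crosses (x,y) (i,k)" "(g1,g2) \<in> D" "crosses (g1,g2) (i,x)" for x y g1 g2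
  proof -
    have V: "x < n" "y < n" "g1 < n" "g2 < n" using dis_D[OF dis] h by auto
    have "crosses (y,x) (k,i)" using h(2) cr_swap cr_swap2 by metis
    moreover have "crosses (g1,g2) (x,i)" using h(4) cr_swap2 by metis
    moreover have "\<not> crosses (g1,g2) (y,x)" using dis_nc[OF dis h(3)] dis_D[OF dis h(1)] by blast
    ultimately have "crosses (g1,g2) (k,i)" using GX1[of y n x k i g1 g2] V ik by blast
    then have c1: "crosses (g1,g2) (i,k)" using cr_swap2 by metis
    have sub: "{h\<in>D. crosses h (i,g1) \<or> crosses h (i,g2)} \<subseteq> {h\<in>D. crosses h (i,x) \<or> crosses h (i,y)}"
    proof
      fix e assume e: "e \<in> {h\<in>D. crosses h (i,g1) \<or> crosses h (i,g2)}"
      obtain h1 h2 where hh: "e = (h1,h2)" by (cases e)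
      have Vh: "h1 < n" "h2 < n" using dis_D[OF dis] e hh by auto
      have n1: "\<not> crosses (h1,h2) (g1,g2)" "\<not> crosses (h1,h2) (g2,g1)"
        using dis_nc[OF dis] e hh h(3) dis_D[OF dis h(3)] by auto
      have g': "crosses (g2,g1) (i,x)" using h(4) cr_swap by metis
      have "crosses (h1,h2) (i,x)"
      proof (cases "crosses (h1,h2) (i,g1)")
        case True then show ?thesis using GX7[of x n y i k g1 g2 h1 h2] V Vh ik h(2,4) n1 by blast
      next
        case False
        then have "crosses (h1,h2) (i,g2)" using e hh by auto
        then show ?thesis using GX7[of x n y i k g2 g1 h1 h2] V Vh ik h(2) g' n1 by blast
      qed
      then show "e \<in> {h\<in>D. crosses h (i,x) \<or> crosses h (i,y)}" using e hh by auto
    qed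
    have "(g1,g2) \<in> {h\<in>D. crosses h (i,x) \<or> crosses h (i,y)}" using h by auto
    moreover have "(g1,g2) \<notin> {h\<in>D. crosses h (i,g1) \<or> crosses h (i,g2)}"
      using cr_dist[of g1 g2 i g1] cr_dist[of g1 g2 i g2] by auto
    ultimately have "{h\<in>D. crosses h (i,g1) \<or> crosses h (i,g2)} \<subset> {h\<in>D. crosses h (i,x) \<or> crosses h (i,y)}"
      using sub by blast
    then have "\<mu> g1 g2 < \<mu> x y" unfolding \<mu>_def using psubset_card_mono[OF fin] by blast
    then show ?thesis using c1 by blast
  qed
  have main: "\<And>m x y. \<mu> x y = m \<Longrightarrow> (x,y) \<in> D \<Longrightarrow> crosses (x,y) (i,k) \<Longrightarrow>
      \<exists>a b. (a,b) \<in> D \<and> crosses (a,b) (i,k) \<and> noX D (i,a) \<and> noX D (i,b)"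
  proof -
    fix m
    show "\<And>x y. \<mu> x y = m \<Longrightarrow> (x,y) \<in> D \<Longrightarrow> crosses (x,y) (i,k) \<Longrightarrow>
      \<exists>a b. (a,b) \<in> D \<and> crosses (a,b) (i,k) \<and> noX D (i,a) \<and> noX D (i,b)"
    proof (induction m rule: less_induct)
      case (less m x y)
      show ?case
      proof (cases "noX D (i,x) \<and> noX D (i,y)")
        case True then show ?thesis using less.prems by blast
      next
        case False
        then consider "\<not> noX D (i,x)" | "\<not> noX D (i,y)" by blast
        then show ?thesis
        proof cases
          case 1
          then have "\<not> noX D (i,x)" .
          then obtain g1 g2 where g: "(g1,g2) \<in> D" "crosses (i,x) (g1,g2)" unfolding noX_def by auto
          then have "crosses (g1,g2) (i,x)" using cr_sym by metis
          then have "crosses (g1,g2) (i,k) \<and> \<mu> g1 g2 < \<mu> x y" using key less.prems g by blast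
          then show ?thesis using less.IH less.prems g by blast
        next
          case 2
          then have "\<not> noX D (i,y)" .
          then obtain g1 g2 where g: "(g1,g2) \<in> D" "crosses (i,y) (g1,g2)" unfolding noX_def by auto
          then have gc: "crosses (g1,g2) (i,y)" using cr_sym by metis
          have yx: "(y,x) \<in> D" "crosses (y,x) (i,k)" using less.prems dis_D[OF dis] cr_swap by metis+
          have "crosses (g1,g2) (i,k) \<and> \<mu> g1 g2 < \<mu> y x" using key[OF yx g(1) gc] .
          then show ?thesis using less.IH less.prems g musym by metis
        qed
      qed
    qed
  qed
  show ?thesis using main[OF refl xy] .
qed



lemma side:
  fixes c :: "nat \<Rightarrow> nat \<Rightarrow> 'a::ring_1"
  assumes dis: "dissection n D" and ik: "i < n" "k < n" and ab: "(a,b) \<in> D" "crosses (a,b) (i,k)"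
    and na: "noX D (i,a)" and nb: "noX D (i,b)" and units: "\<forall>(t,v)\<in>D. is_unit (c t v)"
    and x: "x < n" "x \<noteq> i" "x \<in> {a,b} \<or> crosses (i,x) (a,b)"
  shows "Sf n D c i x = c i a * uinv (c b a) * Sf n D c b x + c i b * uinv (c a b) * Sf n D c a x"
proof -
  have bas: "a < n" "b < n" "a \<noteq> b" "(b,a) \<in> D" "i \<noteq> a" "i \<noteq> b"
    using dis_D[OF dis ab(1)] cr_dist[OF ab(2)] by auto
  have u: "uinv (c b a) * c b a = 1" "uinv (c a b) * c a b = 1"
    using units ab(1) bas(4) is_unit_uinv by fastforce+
  have sab: "Sf n D c b a = c b a" "Sf n D c a b = c a b"
    using Sf_noX[OF dis_noX[OF dis bas(4)], of n c] Sf_noX[OF dis_noX[OF dis ab(1)], of n c] bas by auto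
  have sia: "Sf n D c i a = c i a" "Sf n D c i b = c i b"
    using Sf_noX[OF na, of n c] Sf_noX[OF nb, of n c] bas ik by auto
  consider "x = a" | "x = b" | "x \<noteq> a" "x \<noteq> b" by blast
  then show ?thesis
  proof cases
    case 1
    then show ?thesis using sab sia u by (simp add: Sf_diag mult.assoc)
  next
    case 2
    then show ?thesis using sab sia u by (simp add: Sf_diag mult.assoc)
  next
    case 3
    then have "crosses (i,x) (a,b)" using x by auto
    then have "crosses (a,b) (i,x)" using cr_sym by metis
    then show ?thesis using FRl[OF dis ik(1) x(1) ab(1) _ na nb units] by blast
  qed
qed

lemma Prel:
  fixes c :: "nat \<Rightarrow> nat \<Rightarrow> 'a::ring_1"
  assumes dis: "dissection n D" and units: "\<forall>(t,v)\<in>D. is_unit (c t v)"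
  shows "i < n \<Longrightarrow> k < n \<Longrightarrow> (t,v) \<in> D \<Longrightarrow> crosses (t,v) (i,k) \<Longrightarrow>
    Sf n D c i k = Sf n D c i t * uinv (Sf n D c v t) * Sf n D c v k + Sf n D c i v * uinv (Sf n D c t v) * Sf n D c t k"
proof (induction "cnt D i k" arbitrary: i k t v rule: less_induct)
  case less
  let ?S = "Sf n D c"
  note ik = less.prems(1,2)
  have tvb: "t < n" "v < n" "t \<noteq> v" "(v,t) \<in> D" using dis_D[OF dis less.prems(3)] by auto
  have tvd: "t \<noteq> i" "t \<noteq> k" "v \<noteq> i" "v \<noteq> k" "i \<noteq> k" using cr_dist[OF less.prems(4)] by auto
  have stv: "?S t v = c t v" "?S v t = c v t"
    using Sf_noX[OF dis_noX[OF dis less.prems(3)], of n c] Sf_noX[OF dis_noX[OF dis tvb(4)], of n c] tvb by auto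
  have utv: "c t v * uinv (c t v) = 1" "c v t * uinv (c v t) = 1"
    using units less.prems(3) tvb(4) is_unit_uinv by fastforce+
  obtain a b where ab: "(a,b) \<in> D" "crosses (a,b) (i,k)" and na: "noX D (i,a)" and nb: "noX D (i,b)"
    using first_exists[OF dis ik less.prems(3,4)] by blast
  have bas: "a < n" "b < n" "a \<noteq> b" "(b,a) \<in> D" "i \<noteq> a" "i \<noteq> b" "k \<noteq> a" "k \<noteq> b"
    using dis_D[OF dis ab(1)] cr_dist[OF ab(2)] by auto
  have ab': "crosses (b,a) (i,k)" using ab(2) cr_swap by metis
  have sab: "?S b a = c b a" "?S a b = c a b"
    using Sf_noX[OF dis_noX[OF dis bas(4)], of n c] Sf_noX[OF dis_noX[OF dis ab(1)], of n c] bas by auto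
  have sia: "?S i a = c i a" "?S i b = c i b"
    using Sf_noX[OF na, of n c] Sf_noX[OF nb, of n c] bas ik by auto
  have FR0: "?S i k = c i a * uinv (c b a) * ?S b k + c i b * uinv (c a b) * ?S a k"
    using FRl[OF dis ik ab na nb units] .
  show ?case
  proof (cases "{t,v} = {a,b}")
    case True
    then consider "t = a" "v = b" | "t = b" "v = a" by (auto simp: doubleton_eq_iff)
    then show ?thesis
    proof cases
      case 1 then show ?thesis using FR0 sab sia by simp
    next
      case 2 then show ?thesis using FR0 sab sia by (simp add: add.commute)
    qed
  next
    case False
    have ident: "?S y k = ?S y t * uinv (?S v t) * ?S v k + ?S y v * uinv (?S t v) * ?S t k"
      if y: "y < n" "(x,y) \<in> D" "crosses (x,y) (i,k)" "noX D (i,x)" "noX D (i,y)" for x y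
    proof -
      consider "y = t" | "y = v" | "y \<noteq> t" "y \<noteq> v" by blast
      then show ?thesis
      proof cases
        case 1 then show ?thesis using stv utv by (simp add: Sf_diag mult.assoc[symmetric])
      next
        case 2 then show ?thesis using stv utv by (simp add: Sf_diag mult.assoc[symmetric])
      next
        case 3
        have "crosses (t,v) (y,k)" using C3[OF dis ik y(2,3,4,5) less.prems(3,4)] 3 by blast
        moreover have "cnt D y k < cnt D i k" using cnt_less[OF dis y(2,3) ik] .
        ultimately show ?thesis using less.hyps[of y k t v] y(1) ik less.prems(3) by blast
      qed
    qed
    have e1: "?S b k = ?S b t * uinv (?S v t) * ?S v k + ?S b v * uinv (?S t v) * ?S t k"
      using ident[OF bas(2) ab na nb] .
    have e2: "?S a k = ?S a t * uinv (?S v t) * ?S v k + ?S a v * uinv (?S t v) * ?S t k"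
      using ident[OF bas(1) bas(4) ab' nb na] .
    have xt: "t \<in> {a,b} \<or> crosses (i,t) (a,b)"
    proof (cases "t \<in> {a,b}")
      case False
      have tv: "{t,v} \<noteq> {a,b}" using False by auto
      show ?thesis using C4[OF dis ik ab na nb less.prems(3,4)] False by blast
    qed simp
    have xv: "v \<in> {a,b} \<or> crosses (i,v) (a,b)"
    proof (cases "v \<in> {a,b}")
      case False
      have vt: "crosses (v,t) (i,k)" using less.prems(4) cr_swap by metis
      show ?thesis using C4[OF dis ik ab na nb tvb(4) vt] False by blast
    qed simp
    have e3: "?S i t = c i a * uinv (c b a) * ?S b t + c i b * uinv (c a b) * ?S a t"
      using side[OF dis ik ab na nb units tvb(1) tvd(1) xt] .
    have e4: "?S i v = c i a * uinv (c b a) * ?S b v + c i b * uinv (c a b) * ?S a v"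
      using side[OF dis ik ab na nb units tvb(2) tvd(3) xv] .
    show ?thesis unfolding FR0 e1 e2 e3 e4 by (simp add: algebra_simps)
  qed
qed

lemma uniq:
  fixes c S :: "nat \<Rightarrow> nat \<Rightarrow> 'a::ring_1"
  assumes dis: "dissection n D" and wf: "weak_frieze n D c"
    and rel: "\<And>i k t v. i < n \<Longrightarrow> k < n \<Longrightarrow> (t,v) \<in> D \<Longrightarrow> crosses (t,v) (i,k) \<Longrightarrow>
       S i k = S i t * uinv (S v t) * S v k + S i v * uinv (S t v) * S t k"
    and agree: "\<And>i k. i < n \<Longrightarrow> k < n \<Longrightarrow> i \<noteq> k \<Longrightarrow> noX D (i,k) \<Longrightarrow> S i k = c i k"
  shows "i < n \<Longrightarrow> k < n \<Longrightarrow> i \<noteq> k \<Longrightarrow> S i k = c i k"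
proof (induction "cnt D i k" arbitrary: i k rule: less_induct)
  case less
  show ?case
  proof (cases "noX D (i,k)")
    case True then show ?thesis using agree less.prems by blast
  next
    case False
    then obtain t v where tv: "(t,v) \<in> D" "crosses (i,k) (t,v)" unfolding noX_def by auto
    have tv2: "crosses (t,v) (i,k)" using tv(2) cr_sym by metis
    have tvb: "t < n" "v < n" "t \<noteq> v" "(v,t) \<in> D" using dis_D[OF dis tv(1)] by auto
    have tvd: "t \<noteq> i" "t \<noteq> k" "v \<noteq> i" "v \<noteq> k" using cr_dist[OF tv2] by auto
    have cw: "c i k = c i t * uinv (c v t) * c v k + c i v * uinv (c t v) * c t k"
      using wf less.prems(1,2) tv tvb(4) unfolding weak_frieze_def by blast
    have sw: "S i k = S i t * uinv (S v t) * S v k + S i v * uinv (S t v) * S t k"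
      using rel less.prems(1,2) tv(1) tv2 by blast
    have s1: "S t v = c t v" "S v t = c v t"
      using agree tvb dis_noX[OF dis] tv(1) by auto
    have vt1: "crosses (v,t) (k,i)" "crosses (t,v) (k,i)" "crosses (v,t) (i,k)"
      using tv2 cr_swap cr_swap2 by metis+
    have "cnt D t i < cnt D k i" using cnt_less[OF dis tvb(4) vt1(1) less.prems(2,1)] .
    then have c1: "cnt D i t < cnt D i k" using cnt_sym by metis
    have c2: "cnt D v k < cnt D i k" using cnt_less[OF dis tv(1) tv2 less.prems(1,2)] .
    have "cnt D v i < cnt D k i" using cnt_less[OF dis tv(1) vt1(2) less.prems(2,1)] .
    then have c3: "cnt D i v < cnt D i k" using cnt_sym by metis
    have c4: "cnt D t k < cnt D i k" using cnt_less[OF dis tvb(4) vt1(3) less.prems(1,2)] .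
    have "S i t = c i t" using less.hyps[OF c1] less.prems(1) tvb(1) tvd(1) by auto
    moreover have "S v k = c v k" using less.hyps[OF c2] less.prems(2) tvb(2) tvd(4) by auto
    moreover have "S i v = c i v" using less.hyps[OF c3] less.prems(1) tvb(2) tvd(3) by auto
    moreover have "S t k = c t k" using less.hyps[OF c4] less.prems(2) tvb(1) tvd(2) by auto
    ultimately show ?thesis using cw sw s1 by simp
  qed
qed

theorem theoremB:
  fixes n :: nat and D :: "(nat \<times> nat) set" and c :: "nat \<Rightarrow> nat \<Rightarrow> 'a::ring_1"
  assumes "n \<ge> 3" and "dissection n D"
  shows "weak_frieze n D c \<longleftrightarrow>
    ((\<forall>(t, v)\<in>D. is_unit (c t v)) \<and>
     (\<forall>i < n. \<forall>k < n. i \<noteq> k \<longrightarrow> c i k = (\<Sum>p\<in>tpaths n D i k. tweight c p)))"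
proof
  assume wf: "weak_frieze n D c"
  have units: "\<forall>(t, v)\<in>D. is_unit (c t v)" using wf unfolding weak_frieze_def by blast
  have "Sf n D c i k = c i k" if "i < n" "k < n" "i \<noteq> k" for i k
    using uniq[OF assms(2) wf, of "Sf n D c"] Prel[OF assms(2) units] Sf_noX that by blast
  then show "(\<forall>(t, v)\<in>D. is_unit (c t v)) \<and>
     (\<forall>i < n. \<forall>k < n. i \<noteq> k \<longrightarrow> c i k = (\<Sum>p\<in>tpaths n D i k. tweight c p))"
    using units by (simp add: Sf_def)
next
  assume h: "(\<forall>(t, v)\<in>D. is_unit (c t v)) \<and>
     (\<forall>i < n. \<forall>k < n. i \<noteq> k \<longrightarrow> c i k = (\<Sum>p\<in>tpaths n D i k. tweight c p))"
  then have units: "\<forall>(t, v)\<in>D. is_unit (c t v)" by blast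
  have eq: "\<And>i k. i < n \<Longrightarrow> k < n \<Longrightarrow> i \<noteq> k \<Longrightarrow> c i k = Sf n D c i k"
    using h by (simp add: Sf_def)
  show "weak_frieze n D c"
    unfolding weak_frieze_def
  proof (intro conjI allI impI)
    show "\<forall>(t, v)\<in>D. is_unit (c t v)" using units .
  next
    fix i k t v assume a: "i < n" "k < n" "(t, v) \<in> D" "(v, t) \<in> D" "crosses (i, k) (t, v)"
    have tv2: "crosses (t,v) (i,k)" using a(5) cr_sym by metis
    have tvb: "t < n" "v < n" using dis_D[OF assms(2) a(3)] by auto
    have d: "t \<noteq> i" "t \<noteq> k" "v \<noteq> i" "v \<noteq> k" "i \<noteq> k" "t \<noteq> v" using cr_dist[OF tv2] by auto
    have "Sf n D c i k = Sf n D c i t * uinv (Sf n D c v t) * Sf n D c v k + Sf n D c i v * uinv (Sf n D c t v) * Sf n D c t k"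
      using Prel[OF assms(2) units a(1,2,3) tv2] .
    then show "c i k = c i t * uinv (c v t) * c v k + c i v * uinv (c t v) * c t k"
      using eq a(1,2) tvb d by simp
  qed
qed


end
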